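(* Let $X$ be a real random variable taking values in the interval $\mathcal{I}\subseteq\mathbb{R}$, and let $h:\mathcal{I}\to\mathcal{J}$ have a non-decreasing upper tail with threshold $c\in(\inf\mathcal{I},\sup\mathcal{I})$. Let $h^{\star}=\sup_{x<c,\,x\in\mathcal{I}}h(x)$, $\pi_c=\mathbb{P}[h(X)\le h^{\star}]$, and define $\tilde h:\mathcal{I}\to\mathcal{J}$ by $\tilde h(x)=h^{\star}$ if $x<c$, $\tilde h(c)=\max\{h(c),h^{\star}\}$, and $\tilde h(x)=h(x)$ if $x>c$. Then $$\tilde h\big(F_X^{-1(\alpha)}(p)\big)=h\big(F_X^{-1(\alpha)}(p)\big)\quad\text{for all } p>\pi_c \text{ and } \alpha\in[0,1].$$
   Context: For a random variable $Y$ with cdf $F_Y$: $F_Y^{-1}(p)=\inf\{x\in\mathbb{R}: F_Y(x)\ge p\}$ (with $\inf\emptyset=+\infty$), $F_Y^{-1+}(p)=\sup\{x\in\mathbb{R}:F_Y(x)\le p\}$ (with $\sup\emptyset=-\infty$), and for $\alpha\in[0,1]$, $F_Y^{-1(\alpha)}(p)=(1-\alpha)F_Y^{-1}(p)+\alpha F_Y^{-1+}(p)$. $h$ is real-valued whose discontinuities (if any) are jumps at which it is left- or right-continuous. A function $h:\mathcal{I}\to\mathcal{J}$ has a non-decreasing upper tail if there exists $x'\in\mathcal{I}$ such that (1) $h(x)\le h(x')$ for all $x\in\mathcal{I}$ with $x<x'$, and (2) $h(x_1)\le h(x_2)$ for all $x_1,x_2\in\mathcal{I}$ with $x'\le x_1\le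 x_2$. Its threshold $c$ is the infimum of the (assumed nonempty) set of all such $x'$. *)

theory Defs
  imports "HOL-Probability.Probability"
begin

definition nd_upper_tail_at :: "real set \<Rightarrow> (real \<Rightarrow> real) \<Rightarrow> real \<Rightarrow> bool" where
  "nd_upper_tail_at I h x' \<longleftrightarrow> x' \<in> I \<and>
     (\<forall>x\<in>I. x < x' \<longrightarrow> h x \<le> h x') \<and>
     (\<forall>x1\<in>I. \<forall>x2\<in>I. x' \<le> x1 \<and> x1 \<le> x2 \<longrightarrow> h x1 \<le> h x2)"

definition has_nd_upper_tail :: "real set \<Rightarrow> (real \<Rightarrow> real) \<Rightarrow> bool" where
  "has_nd_upper_tail I h \<longleftrightarrow> (\<exists>x'. nd_upper_tail_at I h x')"

definition nd_threshold :: "real set \<Rightarrow> (real \<Rightarrow> real) \<Rightarrow> real" where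
  "nd_threshold I h = Inf {x'. nd_upper_tail_at I h x'}"

definition jump_regular :: "real set \<Rightarrow> (real \<Rightarrow> real) \<Rightarrow> bool" where
  "jump_regular I h \<longleftrightarrow> (\<forall>x\<in>I.
      (\<exists>L. (h \<longlongrightarrow> L) (at x within (I \<inter> {..<x}))) \<and>
      (\<exists>R. (h \<longlongrightarrow> R) (at x within (I \<inter> {x<..}))) \<and>
      (continuous (at x within (I \<inter> {..<x})) h \<or> continuous (at x within (I \<inter> {x<..})) h))"

(* generalized inverses of a cdf F (used for p in (0,1), where they are finite) *)
definition quantile_lower :: "(real \<Rightarrow> real) \<Rightarrow> real \<Rightarrow> real" where
  "quantile_lower F p = Inf {x. F x \<ge> p}"

definition quantile_upper :: "(real \<Rightarrow> real) \<Rightarrow> real \<Rightarrow> real" where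
  "quantile_upper F p = Sup {x. F x \<le> p}"

definition quantile_alpha :: "(real \<Rightarrow> real) \<Rightarrow> real \<Rightarrow> real \<Rightarrow> real" where
  "quantile_alpha F \<alpha> p = (1 - \<alpha>) * quantile_lower F p + \<alpha> * quantile_upper F p"

end

theory Submission
  imports Defs
begin

theorem lemma3p4:
  fixes M :: "'a measure" and X :: "'a \<Rightarrow> real" and I :: "real set" and h :: "real \<Rightarrow> real"
  assumes "prob_space M"
    and "X \<in> borel_measurable M"
    and "is_interval I"
    and "\<forall>\<omega>\<in>space M. X \<omega> \<in> I"
    and "jump_regular I h"
    and "has_nd_upper_tail I h"
    and "\<exists>a\<in>I. a < nd_threshold I h"
    and "\<exists>b\<in>I. nd_threshold I h < b"
  shows "let c = nd_threshold I h;
             hstar = Sup (h ` {x\<in>I. x < c});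
             \<pi>c = measure M {\<omega>\<in>space M. h (X \<omega>) \<le> hstar};
             htilde = (\<lambda>x. if x < c then hstar else if x = c then max (h c) hstar else h x);
             F = cdf (distr M borel X)
         in \<forall>p \<alpha>. \<pi>c < p \<and> p < 1 \<and> 0 \<le> \<alpha> \<and> \<alpha> \<le> 1 \<longrightarrow>
              htilde (quantile_alpha F \<alpha> p) = h (quantile_alpha F \<alpha> p)"
proof -
  interpret P: prob_space M by fact
  define c where "c = nd_threshold I h"
  define hstar where "hstar = Sup (h ` {x\<in>I. x < c})"
  define B where "B = {\<omega>\<in>space M. h (X \<omega>) \<le> hstar}"
  define D where "D = distr M borel X"
  define F where "F = cdf D"
  have RD: "real_distribution D" unfolding D_def using assms(2) by simp
  interpret R: real_distribution D by (rule RD)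
  obtain a b where a: "a \<in> I" "a < c" and b: "b \<in> I" "c < b"
    using assms(7,8) c_def by blast
  have cI: "c \<in> I" using assms(3) a b unfolding is_interval_1 by (meson less_imp_le)
  have adm_ne: "{x'. nd_upper_tail_at I h x'} \<noteq> {}"
    using assms(6) unfolding has_nd_upper_tail_def by blast
  have adm_below: "\<exists>x'. nd_upper_tail_at I h x' \<and> x' < z" if "c < z" for z
    using cInf_lessD[OF adm_ne, of z] that unfolding c_def nd_threshold_def by auto
  have mono: "h x1 \<le> h x2" if "x1 \<in> I" "x2 \<in> I" "c \<le> x1" "x1 \<le> x2" for x1 x2
  proof (cases "x1 = x2")
    case False
    then have "c < x2" using that by auto
    then obtain x' where x': "nd_upper_tail_at I h x'" "x' < x2" using adm_below by blast
    show ?thesis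
    proof (cases "x' \<le> x1")
      case True then show ?thesis using x' that unfolding nd_upper_tail_at_def by blast
    next
      case False
      then have "h x1 \<le> h x'" using x' that unfolding nd_upper_tail_at_def by auto
      also have "h x' \<le> h x2" using x' that unfolding nd_upper_tail_at_def by auto
      finally show ?thesis .
    qed
  qed simp
  have bdd: "bdd_above (h ` {x\<in>I. x < c})"
  proof (rule bdd_aboveI2)
    fix x assume x: "x \<in> {x\<in>I. x < c}"
    obtain x' where x': "nd_upper_tail_at I h x'" "x' < b" using adm_below b by blast
    show "h x \<le> h b"
    proof (cases "x' \<le> x")
      case True then show ?thesis using x' x b unfolding nd_upper_tail_at_def by auto
    next
      case False
      then have "h x \<le> h x'" using x' x unfolding nd_upper_tail_at_def by auto
      also have "h x' \<le> h b" using x' b unfolding nd_upper_tail_at_def by auto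
      finally show ?thesis .
    qed
  qed
  have below: "h x \<le> hstar" if "x \<in> I" "x < c" for x
    unfolding hstar_def using bdd that by (intro cSup_upper) auto
  define S where "S = {x\<in>I. h x \<le> hstar}"
  have "is_interval S"
    unfolding is_interval_1
  proof (intro ballI allI impI)
    fix x1 x2 y assume x1: "x1 \<in> S" and x2: "x2 \<in> S" and y: "x1 \<le> y \<and> y \<le> x2"
    have yI: "y \<in> I" using assms(3) x1 x2 y unfolding is_interval_1 S_def by blast
    show "y \<in> S"
    proof (cases "y < c")
      case True then show ?thesis using below yI S_def by auto
    next
      case False
      then have "h y \<le> h x2" using mono[of y x2] yI x2 y S_def by auto
      then show ?thesis using x2 yI S_def by auto
    qed
  qed
  then have Sb: "S \<in> sets borel" by (rule real_interval_borel_measurable)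
  have BS: "B = X -` S \<inter> space M" unfolding B_def S_def using assms(4) by auto
  have Bm: "B \<in> P.events" unfolding BS using assms(2) Sb by (rule measurable_sets)
  have Fx: "F t = measure M {\<omega>\<in>space M. X \<omega> \<le> t}" for t
    unfolding F_def D_def cdf_def using assms(2)
    by (subst measure_distr) (auto simp: vimage_def Int_def conj_commute)
  have FB: "F t \<le> measure M B" if "\<And>\<omega>. \<omega> \<in> space M \<Longrightarrow> X \<omega> \<le> t \<Longrightarrow> h (X \<omega>) \<le> hstar" for t
    unfolding Fx using that Bm by (intro P.finite_measure_mono) (auto simp: B_def)
  show ?thesis
    unfolding Let_def c_def[symmetric] hstar_def[symmetric] B_def[symmetric] D_def[symmetric] F_def[symmetric]
  proof (intro allI impI)
    fix p \<alpha> :: real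
    assume H: "measure M B < p \<and> p < 1 \<and> 0 \<le> \<alpha> \<and> \<alpha> \<le> 1"
    have p0: "0 < p" using H measure_nonneg[of M B] by linarith
    have "eventually (\<lambda>x. F x > p) at_top"
      using R.cdf_lim_at_top_prob H unfolding F_def by (intro order_tendstoD) auto
    then obtain N1 where N1: "\<And>x. x \<ge> N1 \<Longrightarrow> F x > p" by (auto simp: eventually_at_top_linorder)
    have "eventually (\<lambda>x. F x < p) at_bot"
      using R.cdf_lim_at_bot p0 unfolding F_def by (intro order_tendstoD) auto
    then obtain N0 where N0: "\<And>x. x \<le> N0 \<Longrightarrow> F x < p" by (auto simp: eventually_at_bot_linorder)
    define L where "L = {x. F x \<ge> p}"
    define U where "U = {x. F x \<le> p}"
    have Lne: "L \<noteq> {}" using N1[of N1] L_def by (auto intro!: exI[of _ N1])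
    have Lbdd: "bdd_below L" unfolding L_def
      by (rule bdd_belowI[of _ N0]) (metis N0 linorder_not_le mem_Collect_eq nle_le)
    have Une: "U \<noteq> {}" using N0[of N0] U_def by (auto intro!: exI[of _ N0])
    have Ubdd: "bdd_above U" unfolding U_def
      by (rule bdd_aboveI[of _ N1]) (metis N1 linorder_not_le mem_Collect_eq nle_le)
    define qL where "qL = quantile_lower F p"
    define qU where "qU = quantile_upper F p"
    have qL: "qL = Inf L" unfolding qL_def quantile_lower_def L_def by simp
    have qU: "qU = Sup U" unfolding qU_def quantile_upper_def U_def by simp
    have qLc: "c \<le> qL"
    proof (rule ccontr)
      assume "\<not> c \<le> qL"
      then have "Inf L < c" using qL by simp
      then obtain x where x: "x \<in> L" "x < c" using cInf_lessD[OF Lne] by blast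
      have "F x \<le> measure M B" using x assms(4) below by (intro FB) auto
      then show False using x H L_def by auto
    qed
    have qLU: "qL \<le> qU"
    proof (rule ccontr)
      assume "\<not> qL \<le> qU"
      then have "qU < (qL + qU) / 2" "(qL + qU) / 2 < qL" by auto
      then have "F ((qL + qU) / 2) < p"
        using cInf_lower[OF _ Lbdd, of "(qL + qU) / 2"] qL L_def by fastforce
      then have "(qL + qU) / 2 \<in> U" unfolding U_def by simp
      then have "(qL + qU) / 2 \<le> qU" using cSup_upper[OF _ Ubdd] unfolding qU by blast
      then show False using \<open>qU < (qL + qU) / 2\<close> by simp
    qed
    define q where "q = quantile_alpha F \<alpha> p"
    have q: "q = (1 - \<alpha>) * qL + \<alpha> * qU" unfolding q_def quantile_alpha_def qL_def qU_def by simp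
    have qqL: "qL \<le> q"
    proof -
      have "\<alpha> * qL \<le> \<alpha> * qU" using H qLU by (intro mult_left_mono) auto
      then show ?thesis unfolding q by (simp add: algebra_simps)
    qed
    have "h c > hstar" if "q = c"
    proof (rule ccontr)
      assume nh: "\<not> h c > hstar"
      have qLc': "qL = c" using qLc qqL that by simp
      have ge: "p \<le> F y" if cy: "c < y" for y
      proof -
        obtain x where "x \<in> L" "x < y" using cInf_lessD[OF Lne, of y] qL qLc' cy by auto
        then show "p \<le> F y" using R.cdf_nondecreasing[of x y] unfolding L_def F_def by auto
      qed
      have "eventually (\<lambda>y. F y \<ge> p) (at_right c)"
        by (rule eventually_mono[OF eventually_at_right_less]) (use ge in auto)
      moreover have "(F \<longlongrightarrow> F c) (at_right c)"
        using R.cdf_is_right_cont[of c] unfolding F_def continuous_within by simp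
      ultimately have "p \<le> F c"
        by (intro tendsto_lowerbound) auto
      moreover have "F c \<le> measure M B"
      proof (rule FB)
        fix \<omega> assume "\<omega> \<in> space M" "X \<omega> \<le> c"
        then show "h (X \<omega>) \<le> hstar" using below assms(4) nh
          by (cases "X \<omega> = c") auto
      qed
      ultimately show False using H by simp
    qed
    then show "(if q < c then hstar else if q = c then max (h c) hstar else h q) = h q"
      using qLc qqL by auto
  qed
qed

end
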